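(* Let $m\in\mathbb{N}=\{0,1,2,\dots\}$ and $a>-1$. Then $$\int_{0}^{\infty}\frac{dx}{(x^{4}+2ax^{2}+1)^{m+1}}=\frac{\pi}{2}\,\frac{P_{m}(a)}{[2(a+1)]^{m+1/2}},\qquad P_m(a)=\sum_{l=0}^{m}d_{l,m}a^{l},$$ where $$d_{l,m}=2^{-2m}\sum_{k=l}^{m}2^{k}\binom{2m-2k}{m-k}\binom{m+k}{m}\binom{k}{l},\qquad 0\le l\le m .$$ In particular each $d_{l,m}$ is a positive rational number, and for $m\ge 1$ one has $2^{2m-1}d_{l,m}\in\mathbb{Z}$. *)

theory Defs
  imports "HOL-Analysis.Analysis"
begin

definition d_coef :: "nat \<Rightarrow> nat \<Rightarrow> rat" where
  "d_coef l m = (1 / 2 ^ (2 * m)) *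
     (\<Sum>k = l..m. 2 ^ k * of_nat ((2 * m - 2 * k) choose (m - k))
                        * of_nat ((m + k) choose m) * of_nat (k choose l))"

definition P_poly :: "nat \<Rightarrow> real \<Rightarrow> real" where
  "P_poly m a = (\<Sum>l = 0..m. of_rat (d_coef l m) * a ^ l)"

end

theory Submission
  imports Defs "HOL-Real_Asymp.Real_Asymp"
begin


definition Fm :: "nat \<Rightarrow> real \<Rightarrow> real" where
  "Fm m t = (\<Sum>k\<le>m. real ((m+k) choose (2*k)) * t^(2*k))"
definition Gm :: "nat \<Rightarrow> real \<Rightarrow> real" where
  "Gm m t = (\<Sum>k\<le>m. real ((m+k+1) choose (2*k+1)) * t^(2*k))"

lemma Fm_Suc: "Fm (Suc m) t = Fm m t + t^2 * Gm m t"
proof -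
  have "Fm (Suc m) t = 1 + (\<Sum>k\<le>m. real ((m+k+2) choose (2*k+2)) * t^(2*k+2))"
    unfolding Fm_def by (subst sum.atMost_Suc_shift) (simp del: binomial_Suc_Suc add: algebra_simps)
  also have "\<dots> = 1 + (\<Sum>k\<le>m. real ((m+k+1) choose (2*k+2)) * t^(2*k+2))
       + (\<Sum>k\<le>m. real ((m+k+1) choose (2*k+1)) * t^(2*k+2))"
  proof -
    have "(m+k+2) choose (2*k+2) = ((m+k+1) choose (2*k+2)) + ((m+k+1) choose (2*k+1))" for k
      by (simp add: numeral_2_eq_2)
    then show ?thesis by (simp del: binomial_Suc_Suc add: sum.distrib algebra_simps)
  qed
  also have "1 + (\<Sum>k\<le>m. real ((m+k+1) choose (2*k+2)) * t^(2*k+2)) = Fm m t"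
  proof -
    have "Fm m t = (\<Sum>k\<le>Suc m. real ((m+k) choose (2*k)) * t^(2*k))"
      unfolding Fm_def by (subst sum.atMost_Suc) (simp del: binomial_Suc_Suc add: binomial_eq_0)
    also have "\<dots> = 1 + (\<Sum>k\<le>m. real ((m+k+1) choose (2*k+2)) * t^(2*k+2))"
      by (subst sum.atMost_Suc_shift) (simp del: binomial_Suc_Suc add: algebra_simps)
    finally show ?thesis by simp
  qed
  also have "(\<Sum>k\<le>m. real ((m+k+1) choose (2*k+1)) * t^(2*k+2)) = t^2 * Gm m t"
    unfolding Gm_def by (simp del: binomial_Suc_Suc add: sum_distrib_left power_add algebra_simps power2_eq_square)
  finally show ?thesis .
qed

lemma Gm_Suc: "Gm (Suc m) t = Gm m t + Fm (Suc m) t"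
proof -
  have "Gm (Suc m) t = (\<Sum>k\<le>Suc m. real (Suc (m+k+1) choose Suc (2*k)) * t^(2*k))"
    unfolding Gm_def by (simp del: binomial_Suc_Suc)
  also have "\<dots> = (\<Sum>k\<le>Suc m. real ((m+k+1) choose (Suc (2*k))) * t^(2*k))
     + (\<Sum>k\<le>Suc m. real ((m+k+1) choose (2*k)) * t^(2*k))"
    by (simp only: binomial_Suc_Suc of_nat_add distrib_right sum.distrib add.commute)
  also have "(\<Sum>k\<le>Suc m. real ((m+k+1) choose (Suc (2*k))) * t^(2*k)) = Gm m t"
    unfolding Gm_def by (subst sum.atMost_Suc) (simp del: binomial_Suc_Suc add: binomial_eq_0 algebra_simps)
  also have "(\<Sum>k\<le>Suc m. real ((m+k+1) choose (2*k)) * t^(2*k)) = Fm (Suc m) t"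
    unfolding Fm_def by (simp del: binomial_Suc_Suc add: algebra_simps)
  finally show ?thesis .
qed

lemma PQ_identity:
  fixes x :: real assumes "x \<noteq> 0"
  shows "x^(2*m+1) + (1/x)^(2*m+1) = (x + 1/x) * Fm m (x - 1/x)
       \<and> x^(2*m+2) - (1/x)^(2*m+2) = (x + 1/x) * (x - 1/x) * Gm m (x - 1/x)"
  using assms
proof (induction m)
  case 0
  then show ?case using assms by (simp add: Fm_def Gm_def field_simps power2_eq_square)
next
  case (Suc m)
  let ?t = "x - 1/x" and ?s = "x + 1/x"
  define u where "u = x^(2*m+1)"
  define v where "v = (1/x)^(2*m+1)"
  have xy: "x * (1/x) = 1" using assms by simp
  have e1: "x^(2*Suc m+1) = u * x^2" "(1/x)^(2*Suc m+1) = v * (1/x)^2"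
     "x^(2*m+2) = u * x" "(1/x)^(2*m+2) = v * (1/x)"
     "x^(2*Suc m+2) = u * x^3" "(1/x)^(2*Suc m+2) = v * (1/x)^3"
    by (simp_all add: u_def v_def power_add power_Suc algebra_simps numeral_eq_Suc)
  note IH = Suc.IH[OF Suc.prems]
  have IH1: "u + v = ?s * Fm m ?t"
    using conjunct1[OF IH] unfolding u_def v_def .
  have IH2: "u * x - v * (1/x) = ?s * ?t * Gm m ?t"
    using conjunct2[OF IH] unfolding e1(3) e1(4) .
  have P: "u * x^2 + v * (1/x)^2 = (u + v) + ?t * (u * x - v * (1/x))"
    using xy assms by (simp add: algebra_simps power2_eq_square)
  have P2: "x^(2*Suc m+1) + (1/x)^(2*Suc m+1) = ?s * Fm (Suc m) ?t"
    unfolding e1 P Fm_Suc IH1 IH2 using assms by (simp add: field_simps power2_eq_square)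
  have Q: "u * x^3 - v * (1/x)^3 = (u * x - v * (1/x)) + ?t * (u * x^2 + v * (1/x)^2)"
    using assms by (simp add: field_simps power3_eq_cube power2_eq_square)
  have Q2: "x^(2*Suc m+2) - (1/x)^(2*Suc m+2) = ?s * ?t * Gm (Suc m) ?t"
  proof -
    have "u * x^3 - v * (1/x)^3 = ?s * ?t * Gm m ?t + ?t * (?s * Fm (Suc m) ?t)"
      using Q IH2 P2[unfolded e1(1,2)] by simp
    moreover have "\<And>A s t G F::real. A = s*t*G + t*(s*F) \<Longrightarrow> A = s*t*(G+F)"
      by (simp add: algebra_simps)
    ultimately show ?thesis unfolding e1(5,6) Gm_Suc by blast
  qed
  show ?case using P2 Q2 by simp
qed




definition W :: "nat \<Rightarrow> nat \<Rightarrow> real" where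
  "W p q = integral {0..pi/2} (\<lambda>\<theta>. sin \<theta> ^ p * cos \<theta> ^ q)"

lemma W_int: "(\<lambda>\<theta>. sin \<theta> ^ p * cos \<theta> ^ q) integrable_on {0..pi/2}"
  by (intro integrable_continuous_interval continuous_intros)

lemma W_has: "((\<lambda>\<theta>. sin \<theta> ^ p * cos \<theta> ^ q) has_integral W p q) {0..pi/2}"
  unfolding W_def using W_int by (rule integrable_integral)

lemma sc_aux: "(s::real)^p*c^(q+2)+s^(p+2)*c^q = s^p*c^q*(s^2+c^2)"
  by (simp add: power_add algebra_simps power2_eq_square)

lemma W_R1: "W p (q+2) + W (p+2) q = W p q"
proof -
  have "((\<lambda>\<theta>. sin \<theta> ^ p * cos \<theta> ^ (q+2) + sin \<theta> ^ (p+2) * cos \<theta> ^ q) has_integral W p (q+2) + W (p+2) q) {0..pi/2}"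
    by (intro has_integral_add W_has)
  moreover have "(\<lambda>\<theta>::real. sin \<theta> ^ p * cos \<theta> ^ (q+2) + sin \<theta> ^ (p+2) * cos \<theta> ^ q) = (\<lambda>\<theta>. sin \<theta> ^ p * cos \<theta> ^ q)"
  proof
    fix \<theta> :: real
    show "sin \<theta> ^ p * cos \<theta> ^ (q+2) + sin \<theta> ^ (p+2) * cos \<theta> ^ q = sin \<theta> ^ p * cos \<theta> ^ q"
      using sc_aux[of "sin \<theta>" p "cos \<theta>" q] by simp
  qed
  ultimately have "((\<lambda>\<theta>. sin \<theta> ^ p * cos \<theta> ^ q) has_integral W p (q+2) + W (p+2) q) {0..pi/2}"
    by simp
  from has_integral_unique[OF this W_has] show ?thesis .
qed

lemma W_R2: "real (p+1) * W p (q+2) = real (q+1) * W (p+2) q"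
proof -
  let ?phi = "\<lambda>\<theta>::real. sin \<theta> ^ (p+1) * cos \<theta> ^ (q+1)"
  let ?d = "\<lambda>\<theta>::real. real (p+1) * (sin \<theta> ^ p * cos \<theta> ^ (q+2)) - real (q+1) * (sin \<theta> ^ (p+2) * cos \<theta> ^ q)"
  have "(?d has_integral ?phi (pi/2) - ?phi 0) {0..pi/2}"
  proof (rule fundamental_theorem_of_calculus)
    show "0 \<le> pi/2" by simp
    fix x :: real
    show "(?phi has_vector_derivative ?d x) (at x within {0..pi/2})"
      unfolding has_real_derivative_iff_has_vector_derivative[symmetric]
      apply (rule derivative_eq_intros | rule refl)+
      by (simp add: power_add)
  qed
  then have "(?d has_integral 0) {0..pi/2}" by simp
  moreover have "(?d has_integral real (p+1) * W p (q+2) - real (q+1) * W (p+2) q) {0..pi/2}"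
    by (intro has_integral_diff has_integral_mult_right W_has)
  ultimately have "0 = real (p+1) * W p (q+2) - real (q+1) * W (p+2) q"
    by (rule has_integral_unique)
  then show ?thesis by simp
qed

lemma W_00: "W 0 0 = pi/2"
  unfolding W_def by simp

lemma W_step1: "real (p+q+2) * W (p+2) q = real (p+1) * W p q"
proof -
  have e: "W p (q+2) = W p q - W (p+2) q" using W_R1[of p q] by simp
  have "real (p+1) * (W p q - W (p+2) q) = real (q+1) * W (p+2) q" using W_R2[of p q] e by simp
  then show ?thesis by (simp add: algebra_simps)
qed

lemma W_step2: "real (p+q+2) * W p (q+2) = real (q+1) * W p q"
proof -
  have e: "W (p+2) q = W p q - W p (q+2)" using W_R1[of p q] by simp
  have "real (p+1) * W p (q+2) = real (q+1) * (W p q - W p (q+2))" using W_R2[of p q] e by simp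
  then show ?thesis by (simp add: algebra_simps)
qed

definition w :: "nat \<Rightarrow> nat \<Rightarrow> real" where
  "w k l = pi/2 * fact (2*k) * fact (2*l) / (4^(k+l) * fact k * fact l * fact (k+l))"

lemma w_Suc1: "w (Suc k) l = real (2*k+1) / real (2*k+2*l+2) * w k l"
proof -
  have a: "fact (2*Suc k) = (real (2*k+2) * real (2*k+1)) * (fact (2*k)::real)"
    by (simp add: fact_Suc numeral_2_eq_2 algebra_simps)
  have b: "fact (Suc k + l) = real (k+l+1) * (fact (k+l)::real)"
    by (simp add: fact_Suc algebra_simps)
  have c: "fact (Suc k) = real (k+1) * (fact k::real)" by (simp add: fact_Suc)
  have d: "(4::real)^(Suc k + l) = 4 * 4^(k+l)" by simp
  show ?thesis unfolding w_def a b c d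
    by (simp add: divide_simps del: of_nat_add of_nat_Suc) (simp add: algebra_simps)
qed
lemma w_Suc2: "w 0 (Suc l) = real (2*l+1) / real (2*l+2) * w 0 l"
proof -
  have a: "fact (2*Suc l) = (real (2*l+2) * real (2*l+1)) * (fact (2*l)::real)"
    by (simp add: fact_Suc numeral_2_eq_2 algebra_simps)
  have c: "fact (Suc l) = real (l+1) * (fact l::real)" by (simp add: fact_Suc)
  have d: "(4::real)^(0 + Suc l) = 4 * 4^(0+l)" by simp
  show ?thesis unfolding w_def a c d
    by (simp add: divide_simps del: of_nat_add of_nat_Suc) (simp add: algebra_simps)
qed

lemma W_0l: "W 0 (2*l) = w 0 l"
proof (induction l)
  case 0 then show ?case by (simp add: W_00 w_def)
next
  case (Suc l)
  have h: "real (2*l+2) * W 0 (2*l+2) = real (2*l+1) * W 0 (2*l)"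
    using W_step2[of 0 "2*l"] by simp
  have nz: "real (2*l+2) \<noteq> 0" by linarith
  have "W 0 (2*Suc l) = real (2*l+1) / real (2*l+2) * W 0 (2*l)"
    using h nz by (simp add: divide_simps mult.commute del: of_nat_add of_nat_Suc)
  then show ?case using Suc.IH w_Suc2 by simp
qed

lemma W_kl: "W (2*k) (2*l) = w k l"
proof (induction k)
  case 0 then show ?case using W_0l by simp
next
  case (Suc k)
  have h: "real (2*k+2*l+2) * W (2*k+2) (2*l) = real (2*k+1) * W (2*k) (2*l)"
    using W_step1[of "2*k" "2*l"] by (simp add: add.assoc)
  have nz: "real (2*k+2*l+2) \<noteq> 0" by linarith
  have "W (2*Suc k) (2*l) = real (2*k+1) / real (2*k+2*l+2) * W (2*k) (2*l)"
    using h nz by (simp add: divide_simps mult.commute del: of_nat_add of_nat_Suc)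
  then show ?case using Suc.IH w_Suc1 by simp
qed




lemma central_even: "m \<ge> 1 \<Longrightarrow> even ((2*m) choose m)"
proof -
  assume "m \<ge> 1"
  then obtain n where n: "m = Suc n" by (cases m) auto
  have "(2*m) choose m = (Suc (2*n+1) choose Suc n)" using n by simp
  also have "\<dots> = ((2*n+1) choose n) + ((2*n+1) choose Suc n)" by (rule binomial_Suc_Suc)
  also have "(2*n+1) choose n = (2*n+1) choose Suc n"
    using binomial_symmetric[of n "2*n+1"] by (simp add: Suc_diff_le)
  finally show ?thesis by simp
qed

lemma d_coef_nat: "d_coef l m = of_nat (\<Sum>k = l..m. 2 ^ k * ((2 * m - 2 * k) choose (m - k))
                        * ((m + k) choose m) * (k choose l)) / 2 ^ (2 * m)"
  unfolding d_coef_def by simp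

lemma d_pos: "l \<le> m \<Longrightarrow> d_coef l m > 0"
proof -
  assume lm: "l \<le> m"
  have "(\<Sum>k = l..m. 2 ^ k * ((2 * m - 2 * k) choose (m - k)) * ((m + k) choose m) * (k choose l)) > (0::nat)"
  proof (rule sum_pos2[of _ l])
    show "l \<in> {l..m}" using lm by simp
    show "0 < 2 ^ l * (2 * m - 2 * l choose (m - l)) * (m + l choose m) * (l choose l)"
      using lm by (simp add: zero_less_binomial)
  qed auto
  then have "(0::rat) < of_nat (\<Sum>k = l..m. 2 ^ k * ((2 * m - 2 * k) choose (m - k)) * ((m + k) choose m) * (k choose l))"
    by (simp only: of_nat_0_less_iff)
  then show ?thesis unfolding d_coef_nat by (rule divide_pos_pos) simp
qed

lemma d_int: "m \<ge> 1 \<Longrightarrow> l \<le> m \<Longrightarrow> 2 ^ (2 * m - 1) * d_coef l m \<in> \<int>"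
proof -
  assume m: "m \<ge> 1" and lm: "l \<le> m"
  define S where "S = (\<Sum>k = l..m. 2 ^ k * ((2 * m - 2 * k) choose (m - k)) * ((m + k) choose m) * (k choose l))"
  have ev: "even S" unfolding S_def
  proof (rule dvd_sum)
    fix k assume k: "k \<in> {l..m}"
    show "2 dvd 2 ^ k * ((2 * m - 2 * k) choose (m - k)) * ((m + k) choose m) * (k choose l)"
    proof (cases "k = 0")
      case True
      then show ?thesis using central_even[OF m] by simp
    next
      case False
      then show ?thesis by simp
    qed
  qed
  then obtain N where N: "S = 2 * N" by blast
  have p: "(2::rat) ^ (2*m) = 2 * 2 ^ (2*m - 1)"
    using m by (simp add: power_Suc[symmetric] del: power_Suc)
  have "2 ^ (2 * m - 1) * d_coef l m = of_nat N"
    unfolding d_coef_nat S_def[symmetric] N p by simp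
  then show ?thesis by simp
qed

lemma P_poly_alt: "P_poly m a = (1/4^m) * (\<Sum>k\<le>m. real ((2*m-2*k) choose (m-k)) * real ((m+k) choose m) * (2*(a+1))^k)"
proof -
  let ?g = "\<lambda>k. 2^k * real ((2*m-2*k) choose (m-k)) * real ((m+k) choose m)"
  have r: "of_rat (d_coef l m) = (1/4^m) * (\<Sum>k\<le>m. ?g k * real (k choose l))" if "l \<le> m" for l
  proof -
    have "of_rat (d_coef l m) = (1/4^m) * (\<Sum>k=l..m. ?g k * real (k choose l))"
      unfolding d_coef_def by (simp add: of_rat_sum of_rat_mult of_rat_divide of_rat_power power_mult)
    also have "(\<Sum>k=l..m. ?g k * real (k choose l)) = (\<Sum>k\<le>m. ?g k * real (k choose l))"
      by (rule sum.mono_neutral_left) auto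
    finally show ?thesis .
  qed
  have "P_poly m a = (\<Sum>l\<le>m. (1/4^m) * (\<Sum>k\<le>m. ?g k * real (k choose l)) * a^l)"
    unfolding P_poly_def atLeast0AtMost by (rule sum.cong) (auto simp: r)
  also have "\<dots> = (1/4^m) * (\<Sum>l\<le>m. \<Sum>k\<le>m. ?g k * (real (k choose l) * a^l))"
    by (simp add: sum_distrib_left sum_distrib_right mult.assoc)
  also have "(\<Sum>l\<le>m. \<Sum>k\<le>m. ?g k * (real (k choose l) * a^l)) = (\<Sum>k\<le>m. \<Sum>l\<le>m. ?g k * (real (k choose l) * a^l))"
    by (rule sum.swap)
  also have "\<dots> = (\<Sum>k\<le>m. ?g k * (\<Sum>l\<le>m. real (k choose l) * a^l))"
    by (simp add: sum_distrib_left)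
  also have "\<dots> = (\<Sum>k\<le>m. ?g k * (a+1)^k)"
  proof -
    have "(\<Sum>l\<le>m. real (k choose l) * a^l) = (a+1)^k" if "k \<le> m" for k
    proof -
      have "(\<Sum>l\<le>m. real (k choose l) * a^l) = (\<Sum>l\<le>k. real (k choose l) * a^l)"
        using that by (intro sum.mono_neutral_right) auto
      also have "\<dots> = (a+1)^k" by (simp add: binomial_ring)
      finally show ?thesis .
    qed
    then show ?thesis by (intro sum.cong) auto
  qed
  also have "\<dots> = (\<Sum>k\<le>m. real ((2*m-2*k) choose (m-k)) * real ((m+k) choose m) * (2*(a+1))^k)"
    by (intro sum.cong refl) (simp only: power_mult_distrib mult_ac)
  finally show ?thesis .
qed




definition fI :: "real \<Rightarrow> nat \<Rightarrow> real \<Rightarrow> real" where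
  "fI a m x = 1 / (x ^ 4 + 2 * a * x ^ 2 + 1) ^ (m + 1)"

lemma Q_pos: assumes "a > -1" shows "(x::real) ^ 4 + 2 * a * x ^ 2 + 1 > 0"
proof (cases "a \<ge> 0")
  case True
  have h1: "0 \<le> (x^2)^2" by simp
  have h2: "0 \<le> a * x^2" using True by simp
  have "x^4 = (x^2)^2" by (simp flip: power_mult)
  then show ?thesis using h1 h2 by linarith
next
  case False
  have "x ^ 4 + 2 * a * x ^ 2 + 1 = (x^2 + a)^2 + (1 - a^2)"
    by (simp add: algebra_simps power2_eq_square power4_eq_xxxx)
  moreover have "a^2 < 1" using False assms by (simp add: abs_square_less_1)
  ultimately show ?thesis by (smt (verit) zero_le_power2)
qed

lemma fI_cont: assumes "a > -1" shows "continuous_on S (fI a m)"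
  unfolding fI_def using Q_pos[OF assms] by (intro continuous_intros) (auto simp: less_imp_neq[symmetric])

lemma fI_nonneg: assumes "a > -1" shows "fI a m x \<ge> 0"
  unfolding fI_def using Q_pos[OF assms, of x] by simp

lemma alg_id:
  fixes x a :: real
  assumes x: "x > 0" and a: "a > -1"
  defines "c \<equiv> 2 * (a + 1)" and "t \<equiv> x - 1/x"
  shows "fI a m x + fI a m (1/x) / x^2 = (1 + 1/x^2) * Fm m t / (t^2 + c)^(m+1)"
proof -
  have q1: "x ^ 4 + 2 * a * x ^ 2 + 1 = x^2 * (t^2 + c)"
    using x unfolding t_def c_def by (simp add: field_simps power2_eq_square power4_eq_xxxx)
  have q2: "(1/x) ^ 4 + 2 * a * (1/x) ^ 2 + 1 = (1/x)^2 * (t^2 + c)"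
    using x unfolding t_def c_def by (simp add: field_simps power2_eq_square power4_eq_xxxx)
  define D where "D = (t^2+c)^(m+1)"
  have pm: "(y^2 * (t^2+c))^(m+1) = y^(2*m+2) * D" for y :: real
  proof -
    have "(y^2 * (t^2+c))^(m+1) = (y^2)^(m+1) * D" unfolding D_def by (rule power_mult_distrib)
    also have "(y^2)^(m+1) = y^(2*m+2)" by (metis power_mult mult_2 add_mult_distrib2 mult_1_right)
    finally show ?thesis .
  qed
  have "t^2 + c > 0" unfolding c_def using a by (smt (verit) zero_le_power2)
  then have Dnz: "D \<noteq> 0" unfolding D_def by simp
  have e1: "fI a m x = (1/x)^(2*m+2) / D"
    unfolding fI_def q1 pm using x by (simp add: power_one_over)
  have e2: "fI a m (1/x) / x^2 = x^(2*m) / D"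
    unfolding fI_def q2 pm using x Dnz by (simp add: power_one_over field_simps power2_eq_square)
  have P: "x^(2*m+1) + (1/x)^(2*m+1) = (x + 1/x) * Fm m t"
    using conjunct1[OF PQ_identity[of x m]] x unfolding t_def by simp
  have "(1/x)^(2*m+2) + x^(2*m) = (1/x) * (x^(2*m+1) + (1/x)^(2*m+1))"
    using x by (simp add: field_simps)
  also have "\<dots> = (1 + 1/x^2) * Fm m t" unfolding P using x by (simp add: field_simps power2_eq_square)
  finally have "(1/x)^(2*m+2) + x^(2*m) = (1 + 1/x^2) * Fm m t" .
  moreover have "(1/x)^(2*m+2)/D + x^(2*m)/D = ((1/x)^(2*m+2) + x^(2*m))/D"
    by (simp add: add_divide_distrib)
  ultimately show ?thesis unfolding e1 e2 D_def by simp
qed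


lemma sin_arctan2: "(sin (arctan y))^2 = y^2/(1+y^2)"
proof -
  have "0 \<le> 1 + y^2" by (smt (verit) zero_le_power2)
  then show ?thesis by (simp add: sin_arctan power_divide)
qed

lemma cos_arctan2: "(cos (arctan y))^2 = 1/(1+y^2)"
proof -
  have "0 \<le> 1 + y^2" by (smt (verit) zero_le_power2)
  then show ?thesis by (simp add: cos_arctan power_divide)
qed

definition Tt :: "nat \<Rightarrow> real \<Rightarrow> real \<Rightarrow> real" where
  "Tt m c \<theta> = (\<Sum>k\<le>m. real ((m+k) choose (2*k)) * (c * (sin \<theta>)^2)^k * ((cos \<theta>)^2)^(m-k))"

lemma Tt_cont: "continuous_on S (Tt m c)"
  unfolding Tt_def by (intro continuous_intros)

lemma Tt_arctan:
  assumes c: "c > 0"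
  shows "Tt m c (arctan (t / sqrt c)) = Fm m t * (c / (t^2 + c))^m"
proof -
  let ?\<tau> = "t / sqrt c"
  have tau2: "?\<tau>^2 = t^2 / c" using c by (simp add: power_divide)
  have pos: "t^2 + c > 0" using c by (smt (verit) zero_le_power2)
  have s2: "(sin (arctan ?\<tau>))^2 = t^2 / (t^2 + c)"
  proof -
    have "(sin (arctan ?\<tau>))^2 = ?\<tau>^2 / (1 + ?\<tau>^2)"
      by (rule sin_arctan2)
    also have "\<dots> = t^2 / (t^2 + c)" unfolding tau2 using c pos by (simp add: field_simps)
    finally show ?thesis .
  qed
  have c2: "(cos (arctan ?\<tau>))^2 = c / (t^2 + c)"
  proof -
    have "(cos (arctan ?\<tau>))^2 = 1 / (1 + ?\<tau>^2)"
      by (rule cos_arctan2)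
    also have "\<dots> = c / (t^2 + c)" unfolding tau2 using c pos by (simp add: field_simps)
    finally show ?thesis .
  qed
  have "Tt m c (arctan ?\<tau>) = (\<Sum>k\<le>m. real ((m+k) choose (2*k)) * t^(2*k) * (c / (t^2 + c))^m)"
    unfolding Tt_def s2 c2
  proof (rule sum.cong[OF refl])
    fix k assume k: "k \<in> {..m}"
    have e: "c * (t^2 / (t^2 + c)) = t^2 * (c / (t^2 + c))" by simp
    have "(c * (t^2 / (t^2 + c)))^k * (c / (t^2 + c))^(m-k) = (t^2)^k * ((c / (t^2 + c))^k * (c / (t^2 + c))^(m-k))"
      unfolding e power_mult_distrib by (simp only: mult.assoc)
    also have "(c / (t^2 + c))^k * (c / (t^2 + c))^(m-k) = (c / (t^2 + c))^m"
      using k by (simp flip: power_add)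
    finally show "real ((m+k) choose (2*k)) * (c * (t^2 / (t^2 + c)))^k * (c / (t^2 + c))^(m-k)
        = real ((m+k) choose (2*k)) * t^(2*k) * (c / (t^2 + c))^m"
      by (simp add: power_mult mult.assoc)
  qed
  also have "\<dots> = Fm m t * (c / (t^2 + c))^m"
    unfolding Fm_def by (simp add: sum_distrib_right)
  finally show ?thesis .
qed

definition Aa :: "nat \<Rightarrow> real \<Rightarrow> real \<Rightarrow> real" where
  "Aa m c \<theta> = integral {-(pi/2)..\<theta>} (Tt m c)"

lemma Aa_deriv:
  assumes "-(pi/2) < \<theta>" "\<theta> < pi/2"
  shows "(Aa m c has_real_derivative Tt m c \<theta>) (at \<theta>)"
proof -
  have "(Aa m c has_real_derivative Tt m c \<theta>) (at \<theta> within {-(pi/2)..pi/2})"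
    unfolding Aa_def using assms by (intro integral_has_real_derivative Tt_cont) auto
  then show ?thesis using at_within_Icc_at[OF assms] by simp
qed

lemma Aa_cont: "continuous_on {-(pi/2)..pi/2} (Aa m c)"
  unfolding Aa_def by (intro indefinite_integral_continuous_1 integrable_continuous_interval Tt_cont)

definition Gg :: "nat \<Rightarrow> real \<Rightarrow> real \<Rightarrow> real" where
  "Gg m c x = Aa m c (arctan ((x - 1/x) / sqrt c)) / (2 * c^m * sqrt c)"

lemma val_aux:
  fixes c D s F y :: real
  assumes "c > 0" "D > 0" "s * s = c" "s > 0"
  shows "F * (c / D) ^ m * (c / D * (y / s)) / (2 * c ^ m * s) = y * F / D ^ (m + 1) / 2"
  using assms by (simp add: field_simps power_divide)

lemma Gg_deriv:
  assumes c: "c > 0" and x: "x > 0"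
  shows "(Gg m c has_real_derivative (1 + 1/x^2) * Fm m (x - 1/x) / ((x - 1/x)^2 + c)^(m+1) / 2) (at x)"
proof -
  let ?t = "x - 1/x"
  let ?\<tau> = "?t / sqrt c"
  have d1: "((\<lambda>x. (x - 1/x) / sqrt c) has_real_derivative (1 + 1/x^2) / sqrt c) (at x)"
    using x c by (auto intro!: derivative_eq_intros simp: field_simps power2_eq_square)
  have d2: "(arctan has_real_derivative inverse (1 + ?\<tau>^2)) (at ?\<tau>)" by (rule DERIV_arctan)
  have d3: "(Aa m c has_real_derivative Tt m c (arctan ?\<tau>)) (at (arctan ?\<tau>))"
    using arctan_bounded[of ?\<tau>] by (intro Aa_deriv) auto
  have d: "((\<lambda>x. Aa m c (arctan ((x - 1/x) / sqrt c))) has_real_derivative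
      Tt m c (arctan ?\<tau>) * (inverse (1 + ?\<tau>^2) * ((1 + 1/x^2) / sqrt c))) (at x)"
    using DERIV_chain2[OF d3 DERIV_chain2[OF d2 d1]] .
  have pos: "?t^2 + c > 0" using c by (smt (verit) zero_le_power2)
  have tau2: "?\<tau>^2 = ?t^2 / c" using c by (simp add: power_divide)
  have inv: "inverse (1 + ?\<tau>^2) = c / (?t^2 + c)" unfolding tau2 using c pos by (simp add: field_simps)
  have sq: "sqrt c * sqrt c = c" using c by simp
  have val: "Tt m c (arctan ?\<tau>) * (inverse (1 + ?\<tau>^2) * ((1 + 1/x^2) / sqrt c)) / (2 * c^m * sqrt c)
     = (1 + 1/x^2) * Fm m ?t / (?t^2 + c)^(m+1) / 2"
    unfolding inv Tt_arctan[OF c] using c pos sq by (intro val_aux) auto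
  show ?thesis
    using DERIV_cdivide[OF d, of "2 * c^m * sqrt c"] unfolding Gg_def[abs_def] val .
qed


lemma arctan_mem: "arctan y \<in> {-(pi/2)..pi/2}"
  using arctan_bounded[of y] by auto

lemma main_integral:
  assumes a: "a > -1"
  defines "c \<equiv> 2 * (a + 1)"
  shows "(fI a m has_integral integral {0..pi/2} (Tt m c) / (c^m * sqrt c)) {0..}"
proof -
  have c: "c > 0" unfolding c_def using a by simp
  define F1 where "F1 y = integral {0..y} (fI a m)" for y
  have F1d: "(F1 has_real_derivative fI a m x) (at x)" if x: "x > 0" for x
  proof -
    have "(F1 has_real_derivative fI a m x) (at x within {0..x+1})"
      unfolding F1_def[abs_def] using x by (intro integral_has_real_derivative fI_cont[OF a]) auto
    then show ?thesis using at_within_Icc_at[of 0 x "x+1"] x by simp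
  qed
  have F1c: "(F1 \<longlongrightarrow> 0) (at_right 0)"
  proof -
    have "continuous_on {0..1} F1" unfolding F1_def[abs_def]
      by (intro indefinite_integral_continuous_1 integrable_continuous_interval fI_cont[OF a])
    from continuous_on_Icc_at_rightD[OF this] show ?thesis by (simp add: F1_def)
  qed
  define H where "H x = F1 x - F1 (1/x) - 2 * Gg m c x" for x
  have Hd: "(H has_real_derivative 0) (at x)" if x: "x > 0" for x
  proof -
    have dinv: "((\<lambda>x. 1/x) has_real_derivative -(1/x^2)) (at x)"
      using x by (auto intro!: derivative_eq_intros simp: power2_eq_square)
    have db: "((\<lambda>x. F1 (1/x)) has_real_derivative fI a m (1/x) * (-(1/x^2))) (at x)"
      using DERIV_chain2[OF F1d dinv] x by simp
    have "(H has_real_derivative fI a m x - fI a m (1/x) * (-(1/x^2))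
        - 2 * ((1 + 1/x^2) * Fm m (x - 1/x) / ((x - 1/x)^2 + c)^(m+1) / 2)) (at x)"
      unfolding H_def[abs_def]
      by (intro DERIV_diff DERIV_cmult F1d db Gg_deriv c x)
    moreover have "fI a m x - fI a m (1/x) * (-(1/x^2))
        - 2 * ((1 + 1/x^2) * Fm m (x - 1/x) / ((x - 1/x)^2 + c)^(m+1) / 2) = 0"
      using alg_id[OF x a, of m] unfolding c_def by simp
    ultimately show ?thesis by simp
  qed
  have "\<exists>C. \<forall>x\<in>{0<..}. H x = C"
    by (rule has_field_derivative_zero_constant) (auto intro: has_field_derivative_at_within Hd)
  then obtain C where C: "\<And>x. x > 0 \<Longrightarrow> H x = C" by auto
  have H1: "H 1 = - 2 * (Aa m c 0 / (2 * c^m * sqrt c))" unfolding H_def Gg_def by simp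
  have F1eq: "F1 x = F1 (1/x) + 2 * Gg m c x - 2 * (Aa m c 0 / (2 * c^m * sqrt c))" if "x > 0" for x
    using C[OF that] C[of 1] H1 unfolding H_def by simp
  have lim1: "((\<lambda>x. F1 (1/x)) \<longlongrightarrow> 0) at_top"
    using filterlim_compose[OF F1c filterlim_inverse_at_right_top] by (simp add: inverse_eq_divide)
  have lim_g: "filterlim (\<lambda>x. (x - 1/x) / sqrt c) at_top at_top"
  proof -
    have "filterlim (\<lambda>x::real. x - 1/x) at_top at_top" by real_asymp
    then have "filterlim (\<lambda>x. (1 / sqrt c) * (x - 1/x)) at_top at_top"
      using c by (intro filterlim_tendsto_pos_mult_at_top[OF tendsto_const]) auto
    then show ?thesis by simp
  qed
  have lim_arc: "((\<lambda>x. arctan ((x - 1/x) / sqrt c)) \<longlongrightarrow> pi/2) at_top"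
    using filterlim_compose[OF tendsto_arctan_at_top lim_g] by simp
  have lim2: "((\<lambda>x. Aa m c (arctan ((x - 1/x) / sqrt c))) \<longlongrightarrow> Aa m c (pi/2)) at_top"
  proof (rule continuous_on_tendsto_compose[OF Aa_cont lim_arc])
    show "pi / 2 \<in> {- (pi / 2)..pi / 2}" by simp
    show "\<forall>\<^sub>F x in at_top. arctan ((x - 1 / x) / sqrt c) \<in> {- (pi / 2)..pi / 2}"
      by (rule always_eventually, intro allI arctan_mem)
  qed
  have lim3: "((\<lambda>x. F1 (1/x) + 2 * Gg m c x - 2 * (Aa m c 0 / (2 * c^m * sqrt c)))
      \<longlongrightarrow> 0 + 2 * (Aa m c (pi/2) / (2 * c^m * sqrt c)) - 2 * (Aa m c 0 / (2 * c^m * sqrt c))) at_top"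
    unfolding Gg_def using c by (intro tendsto_intros lim1 lim2) auto
  have Adiff: "Aa m c (pi/2) - Aa m c 0 = integral {0..pi/2} (Tt m c)"
    using Henstock_Kurzweil_Integration.integral_combine[where a="-(pi/2)" and c=0 and b="pi/2" and f="Tt m c"]
    unfolding Aa_def by (simp add: integrable_continuous_interval Tt_cont)
  have "0 + 2 * (Aa m c (pi/2) / (2 * c^m * sqrt c)) - 2 * (Aa m c 0 / (2 * c^m * sqrt c))
      = integral {0..pi/2} (Tt m c) / (c^m * sqrt c)"
    unfolding Adiff[symmetric] by (simp add: diff_divide_distrib)
  then have lim3': "((\<lambda>x. F1 (1/x) + 2 * Gg m c x - 2 * (Aa m c 0 / (2 * c^m * sqrt c)))
      \<longlongrightarrow> integral {0..pi/2} (Tt m c) / (c^m * sqrt c)) at_top"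
    using lim3 by simp
  have limF1: "(F1 \<longlongrightarrow> integral {0..pi/2} (Tt m c) / (c^m * sqrt c)) at_top"
  proof (subst tendsto_cong)
    show "\<forall>\<^sub>F x in at_top. F1 x = F1 (1/x) + 2 * Gg m c x - 2 * (Aa m c 0 / (2 * c^m * sqrt c))"
      using eventually_gt_at_top[of "0::real"] by eventually_elim (rule F1eq)
  qed (rule lim3')
  show ?thesis
  proof (rule has_integral_to_inf)
    show "fI a m integrable_on {0..y}" for y
      by (intro integrable_continuous_interval fI_cont[OF a])
    show "((\<lambda>y. integral {0..y} (fI a m)) \<longlongrightarrow> integral {0..pi/2} (Tt m c) / (c^m * sqrt c)) at_top"
      using limF1 unfolding F1_def .
    show "0 \<le> fI a m y" for y by (rule fI_nonneg[OF a])
  qed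
qed




lemma Tt_integral:
  "(Tt m c has_integral (\<Sum>k\<le>m. real ((m+k) choose (2*k)) * c^k * w k (m-k))) {0..pi/2}"
proof -
  have "((\<lambda>\<theta>. \<Sum>k\<le>m. real ((m+k) choose (2*k)) * c^k * (sin \<theta> ^ (2*k) * cos \<theta> ^ (2*(m-k))))
      has_integral (\<Sum>k\<le>m. real ((m+k) choose (2*k)) * c^k * w k (m-k))) {0..pi/2}"
  proof (rule has_integral_sum)
    fix k assume "k \<in> {..m}"
    show "((\<lambda>\<theta>. real ((m+k) choose (2*k)) * c^k * (sin \<theta> ^ (2*k) * cos \<theta> ^ (2*(m-k))))
      has_integral real ((m+k) choose (2*k)) * c^k * w k (m-k)) {0..pi/2}"
      using has_integral_mult_right[OF W_has[of "2*k" "2*(m-k)"], of "real ((m+k) choose (2*k)) * c^k"]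
      unfolding W_kl .
  qed simp
  moreover have "(\<lambda>\<theta>. \<Sum>k\<le>m. real ((m+k) choose (2*k)) * c^k * (sin \<theta> ^ (2*k) * cos \<theta> ^ (2*(m-k)))) = Tt m c"
    unfolding Tt_def by (intro ext sum.cong refl) (simp only: power_mult_distrib power_mult mult.assoc)
  ultimately show ?thesis by simp
qed

lemma term_id:
  assumes k: "k \<le> m"
  shows "real ((m+k) choose (2*k)) * w k (m-k)
       = pi/2 / 4^m * real ((2*m-2*k) choose (m-k)) * real ((m+k) choose m)"
proof -
  have b1: "real ((m+k) choose (2*k)) = fact (m+k) / (fact (2*k) * fact (m-k))"
    using k by (subst binomial_fact) (auto simp: numeral_2_eq_2)
  have b2: "real ((2*m-2*k) choose (m-k)) = fact (2*m-2*k) / (fact (m-k) * fact (m-k))"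
    using k by (subst binomial_fact) (auto simp: numeral_2_eq_2)
  have b3: "real ((m+k) choose m) = fact (m+k) / (fact m * fact k)"
    by (subst binomial_fact) auto
  have w1: "w k (m-k) = pi/2 * fact (2*k) * fact (2*m-2*k) / (4^m * fact k * fact (m-k) * fact m)"
    unfolding w_def using k by (simp add: right_diff_distrib')
  show ?thesis unfolding b1 b2 b3 w1 by (simp add: field_simps)
qed

lemma final_value:
  assumes a: "a > -1"
  defines "c \<equiv> 2 * (a + 1)"
  shows "integral {0..pi/2} (Tt m c) / (c^m * sqrt c) = (pi / 2) * P_poly m a / (2 * (a + 1)) powr (real m + 1 / 2)"
proof -
  have c: "c > 0" unfolding c_def using a by simp
  have I: "integral {0..pi/2} (Tt m c) = (\<Sum>k\<le>m. real ((m+k) choose (2*k)) * c^k * w k (m-k))"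
    using Tt_integral by (rule integral_unique)
  also have "\<dots> = (\<Sum>k\<le>m. pi/2 / 4^m * real ((2*m-2*k) choose (m-k)) * real ((m+k) choose m) * c^k)"
  proof (rule sum.cong[OF refl])
    fix k assume "k \<in> {..m}"
    then have k: "k \<le> m" by simp
    have "real ((m+k) choose (2*k)) * c^k * w k (m-k) = c^k * (real ((m+k) choose (2*k)) * w k (m-k))"
      by (simp only: mult_ac)
    also have "\<dots> = pi/2 / 4^m * real ((2*m-2*k) choose (m-k)) * real ((m+k) choose m) * c^k"
      unfolding term_id[OF k] by (simp only: mult_ac)
    finally show "real ((m+k) choose (2*k)) * c^k * w k (m-k) = pi/2 / 4^m * real ((2*m-2*k) choose (m-k)) * real ((m+k) choose m) * c^k" .
  qed
  also have "\<dots> = pi/2 * P_poly m a"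
    unfolding P_poly_alt c_def by (simp add: sum_distrib_left mult_ac)
  finally have I2: "integral {0..pi/2} (Tt m c) = pi/2 * P_poly m a" .
  have p: "c powr (real m + 1/2) = c^m * sqrt c"
    using c by (simp add: powr_add powr_realpow powr_half_sqrt)
  show ?thesis unfolding I2 c_def[symmetric] p ..
qed



theorem mainTheorem1:
  fixes m :: nat and a :: real
  assumes "a > -1"
  shows "((\<lambda>x::real. 1 / (x ^ 4 + 2 * a * x ^ 2 + 1) ^ (m + 1)) has_integral
            (pi / 2) * P_poly m a / (2 * (a + 1)) powr (real m + 1 / 2)) {0..}
         \<and> (\<forall>l \<le> m. d_coef l m > 0)
         \<and> (m \<ge> 1 \<longrightarrow> (\<forall>l \<le> m. 2 ^ (2 * m - 1) * d_coef l m \<in> \<int>))"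
proof -
  have "(fI a m has_integral (pi / 2) * P_poly m a / (2 * (a + 1)) powr (real m + 1 / 2)) {0..}"
    using main_integral[OF assms, of m] final_value[OF assms, of m] by simp
  then have "((\<lambda>x::real. 1 / (x ^ 4 + 2 * a * x ^ 2 + 1) ^ (m + 1)) has_integral
            (pi / 2) * P_poly m a / (2 * (a + 1)) powr (real m + 1 / 2)) {0..}"
    unfolding fI_def .
  then show ?thesis using d_pos d_int by auto
qed

end
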